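(* Let $v\in T_1^\circ$ be a term of size $p$. Then for every $\beta\in B_\bullet$, one has $v(1)\cdot\partial\beta = \partial^p\beta\cdot v(1)$ in $B_\bullet$, where $v(1)$ is the evaluation of $v$ at the identity element $1$ of $B_\bullet$ with respect to the operation $\circ$.
   Context: $T_1^\circ$ is the set of terms in a single variable $x$ built with a binary operator $\circ$; the size of a term is its number of variable occurrences. The group $B_\bullet$ is generated by $\sigma_1,\sigma_2,\dots$ and $a_1,a_2,\dots$ subject to: $\sigma_j\sigma_i=\sigma_i\sigma_j$ and $a_j\sigma_i=\sigma_ia_j$ for $j\ge i+2$; $a_j\sigma_i=\sigma_{i+1}a_j$ and $a_ja_i=a_{i+1}a_j$ for $j\le i-1$; $\sigma_j\sigma_i\sigma_j=\sigma_i\sigma_j\sigma_i$, $\sigma_i\sigma_ja_i=a_j\sigma_i$ and $\sigma_j\sigma_ia_j=a_i\sigma_i$ for $j=i+1$. $\partial$ is the endomorphism of $B_\bullet$ with $\partial\sigma_i=\sigma_{i+1}$, $\partial a_i=a_{i+1}$. The operation $\circ$ on $B_\bullet$ is $\beta\circ\gamma=\beta\cdot\partial\gamma\cdot a_1$; thus $x(1)=1$ and $(v_1\circ v_2)(1)=v_1(1)\cdot\partial v_2(1)\cdot a_1$. *)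

theory Defs
  imports Main
begin

(* Generators of B_bullet, 0-based: Sig i stands for sigma_(i+1), Agen i for a_(i+1). *)
datatype gen = Sig nat | Agen nat

(* A letter is a generator together with an exponent flag: (False,g) = g, (True,g) = g^-1. *)
type_synonym letter = "bool \<times> gen"
type_synonym word = "letter list"

definition pos :: "gen \<Rightarrow> letter" where "pos g = (False, g)"

(* Defining relations of B_bullet (0-based indices; the index conditions are shift invariant). *)
inductive brel :: "word \<Rightarrow> word \<Rightarrow> bool" where
  r1: "j \<ge> i + 2 \<Longrightarrow> brel [pos (Sig j), pos (Sig i)] [pos (Sig i), pos (Sig j)]"
| r2: "j \<ge> i + 2 \<Longrightarrow> brel [pos (Agen j), pos (Sig i)] [pos (Sig i), pos (Agen j)]"
| r3: "j + 1 \<le> i \<Longrightarrow> brel [pos (Agen j), pos (Sig i)] [pos (Sig (i+1)), pos (Agen j)]"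
| r4: "j + 1 \<le> i \<Longrightarrow> brel [pos (Agen j), pos (Agen i)] [pos (Agen (i+1)), pos (Agen j)]"
| r5: "j = i + 1 \<Longrightarrow> brel [pos (Sig j), pos (Sig i), pos (Sig j)] [pos (Sig i), pos (Sig j), pos (Sig i)]"
| r6: "j = i + 1 \<Longrightarrow> brel [pos (Sig i), pos (Sig j), pos (Agen i)] [pos (Agen j), pos (Sig i)]"
| r7: "j = i + 1 \<Longrightarrow> brel [pos (Sig j), pos (Sig i), pos (Agen j)] [pos (Agen i), pos (Sig i)]"

(* Equality in the group B_bullet: the congruence on words generated by free
   cancellation and the defining relations (i.e. equality in the presented group). *)
inductive beq :: "word \<Rightarrow> word \<Rightarrow> bool" where
  refl: "beq u u"
| sym: "beq u v \<Longrightarrow> beq v u"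
| trans: "beq u v \<Longrightarrow> beq v w \<Longrightarrow> beq u w"
| cong: "beq u v \<Longrightarrow> beq (x @ u @ y) (x @ v @ y)"
| cancel: "beq [(e, g), (\<not> e, g)] []"
| rel: "brel u v \<Longrightarrow> beq u v"

fun shift_gen :: "gen \<Rightarrow> gen" where
  "shift_gen (Sig i) = Sig (i + 1)"
| "shift_gen (Agen i) = Agen (i + 1)"

definition shift :: "word \<Rightarrow> word" where
  "shift w = map (\<lambda>(e, g). (e, shift_gen g)) w"

datatype tm = X | Op tm tm

fun tsize :: "tm \<Rightarrow> nat" where
  "tsize X = 1"
| "tsize (Op v1 v2) = tsize v1 + tsize v2"

fun eval1 :: "tm \<Rightarrow> word" where
  "eval1 X = []"
| "eval1 (Op v1 v2) = eval1 v1 @ shift (eval1 v2) @ [pos (Agen 0)]"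

end

theory Submission
  imports Defs
begin

lemma shift_append[simp]: "shift (u @ v) = shift u @ shift v"
  by (simp add: shift_def)

lemma shift_Cons[simp]: "shift ((e, g) # u) = (e, shift_gen g) # shift u"
  by (simp add: shift_def)

lemma shift_Nil[simp]: "shift [] = []"
  by (simp add: shift_def)

lemma brel_shift: "brel u v \<Longrightarrow> brel (shift u) (shift v)"
proof (induction rule: brel.induct)
  case r1 then show ?case by (simp add: pos_def) (rule brel.r1[unfolded pos_def], simp)
next
  case r2 then show ?case by (simp add: pos_def) (rule brel.r2[unfolded pos_def], simp)
next
  case (r3 j i) then show ?case using brel.r3[of "Suc j" "Suc i"] by (simp add: pos_def)
next
  case (r4 j i) then show ?case using brel.r4[of "Suc j" "Suc i"] by (simp add: pos_def)
next
  case r5 then show ?case by (simp add: pos_def) (rule brel.r5[unfolded pos_def], simp)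
next
  case r6 then show ?case by (simp add: pos_def) (rule brel.r6[unfolded pos_def], simp)
next
  case r7 then show ?case by (simp add: pos_def) (rule brel.r7[unfolded pos_def], simp)
qed

lemma beq_shift: "beq u v \<Longrightarrow> beq (shift u) (shift v)"
proof (induction rule: beq.induct)
  case (refl u) then show ?case by (rule beq.refl)
next
  case (sym u v) show ?case by (rule beq.sym[OF sym.IH])
next
  case (trans u v w) show ?case by (rule beq.trans[OF trans.IH])
next
  case (cong u v x y) then show ?case using beq.cong by simp
next
  case (cancel e g) then show ?case using beq.cancel by simp
next
  case (rel u v) then show ?case by (simp add: beq.rel brel_shift)
qed

lemma beq_app: "beq u u' \<Longrightarrow> beq v v' \<Longrightarrow> beq (u @ v) (u' @ v')"
proof -
  assume a: "beq u u'" and b: "beq v v'"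
  have "beq ([] @ u @ v) ([] @ u' @ v)" using beq.cong[OF a] .
  moreover have "beq (u' @ v @ []) (u' @ v' @ [])" using beq.cong[OF b] .
  ultimately show ?thesis by (metis beq.trans append_Nil append_Nil2)
qed

lemma letter_pos: "beq [pos (Agen 0), (False, shift_gen g)] [(False, shift_gen (shift_gen g)), pos (Agen 0)]"
proof (cases g)
  case (Sig i)
  then show ?thesis using brel.r3[of 0 "i+1"] beq.rel by (simp add: pos_def)
next
  case (Agen i)
  then show ?thesis using brel.r4[of 0 "i+1"] beq.rel by (simp add: pos_def)
qed

lemma inv_swap:
  assumes h: "beq [a, (False, x)] [(False, y), a]"
  shows "beq [a, (True, x)] [(True, y), a]"
proof -
  have c0: "beq [(True, y), (False, y)] []" using beq.cancel[of True y] by simp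
  have c1: "beq [] [(True, y), (False, y)]" by (rule beq.sym[OF c0])
  have s1: "beq [a, (True, x)] [(True, y), (False, y), a, (True, x)]"
    using beq_app[OF c1 beq.refl[of "[a, (True, x)]"]] by simp
  have s2: "beq [(True, y), (False, y), a, (True, x)] [(True, y), a, (False, x), (True, x)]"
    using beq.cong[OF beq.sym[OF h], of "[(True, y)]" "[(True, x)]"] by simp
  have s3: "beq [(True, y), a, (False, x), (True, x)] [(True, y), a]"
    using beq.cong[OF beq.cancel[of False x], of "[(True, y), a]" "[]"] by simp
  show ?thesis by (rule beq.trans[OF beq.trans[OF s1 s2] s3])
qed

lemma letter_comm: "beq [pos (Agen 0), (e, shift_gen g)] [(e, shift_gen (shift_gen g)), pos (Agen 0)]"
  using letter_pos[of g] inv_swap[OF letter_pos[of g]] by (cases e) auto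

lemma a_comm: "beq (pos (Agen 0) # shift \<beta>) (shift (shift \<beta>) @ [pos (Agen 0)])"
proof (induction \<beta>)
  case Nil then show ?case by (simp add: beq.refl)
next
  case (Cons l \<beta>)
  obtain e g where l: "l = (e, g)" by (cases l)
  have s1: "beq ([pos (Agen 0), (e, shift_gen g)] @ shift \<beta>) ([(e, shift_gen (shift_gen g)), pos (Agen 0)] @ shift \<beta>)"
    using beq_app[OF letter_comm beq.refl] .
  have s2: "beq ([(e, shift_gen (shift_gen g))] @ (pos (Agen 0) # shift \<beta>)) ([(e, shift_gen (shift_gen g))] @ (shift (shift \<beta>) @ [pos (Agen 0)]))"
    using beq_app[OF beq.refl Cons.IH] .
  show ?case using beq.trans[OF s1[simplified] s2[simplified]] l by simp
qed

lemma funpow_shift: "shift ((shift ^^ n) b) = (shift ^^ Suc n) b"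
  by simp

lemma main: "beq (eval1 v @ shift \<beta>) ((shift ^^ tsize v) \<beta> @ eval1 v)"
proof (induction v arbitrary: \<beta>)
  case X then show ?case by (simp add: beq.refl)
next
  case (Op v1 v2)
  let ?E1 = "eval1 v1" and ?E2 = "eval1 v2" and ?a = "pos (Agen 0)"
  let ?p1 = "tsize v1" and ?p2 = "tsize v2"
  have s1: "beq ((?E1 @ shift ?E2) @ (?a # shift \<beta>)) ((?E1 @ shift ?E2) @ (shift (shift \<beta>) @ [?a]))"
    using beq_app[OF beq.refl a_comm] .
  have s2: "beq (?E1 @ shift (?E2 @ shift \<beta>) @ [?a]) (?E1 @ shift ((shift ^^ ?p2) \<beta> @ ?E2) @ [?a])"
    using beq.cong[OF beq_shift[OF Op.IH(2)]] .
  have s3: "beq ((?E1 @ shift ((shift ^^ ?p2) \<beta>)) @ (shift ?E2 @ [?a]))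
                 (((shift ^^ ?p1) ((shift ^^ ?p2) \<beta>) @ ?E1) @ (shift ?E2 @ [?a]))"
    using beq_app[OF Op.IH(1) beq.refl] .
  have e: "(shift ^^ ?p1) ((shift ^^ ?p2) \<beta>) = (shift ^^ (?p1 + ?p2)) \<beta>"
    by (simp add: funpow_add)
  have t0: "beq (eval1 (Op v1 v2) @ shift \<beta>) (?E1 @ shift (?E2 @ shift \<beta>) @ [?a])"
    using s1 by simp
  have t: "beq (eval1 (Op v1 v2) @ shift \<beta>) (?E1 @ shift ((shift ^^ ?p2) \<beta> @ ?E2) @ [?a])"
    by (rule beq.trans[OF t0 s2])
  show ?case using beq.trans[OF t] s3 e by simp
qed

theorem lemma2p7:
  fixes v :: tm and p :: nat and \<beta> :: word
  assumes "tsize v = p"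
  shows "beq (eval1 v @ shift \<beta>) ((shift ^^ p) \<beta> @ eval1 v)"
  using main assms by blast

end
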